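(* Let $\mathcal J$ be an instance of the uniform a priori TRP on vertex set $\bigcup_{v\in X}S_v$ (with root $r$), where for each $v\in X$ the vertices of $S_v$ are co-located (pairwise distance $0$ and identical distances to all other vertices), and every vertex is independently active with probability $p$; let $\Pi$ denote this distribution of the active set. Let $\tau$ be a master tour, fix $z\in X$, and let $C_z^1,\dots,C_z^k$ be the minimal partition of $S_z$ such that the vertices of each $C_z^\ell$ appear consecutively in $\tau$. For two distinct parts $C_z^i$ and $C_z^j$, let $\tau_i$ be the tour obtained from $\tau$ by relocating the vertices of $C_z^j$ to immediately after $C_z^i$, and $\tau_j$ the tour obtained from $\tau$ by relocating the vertices of $C_z^i$ to immediately before $C_z^j$. Then $$\mathbb{E}_{A\sim\Pi}[\mathsf{LAT}^A_\tau]\ge\min\big(\mathbb{E}_{A\sim\Pi}[\mathsf{LAT}^A_{\tau_i}],\ \mathbb{E}_{A\sim\Pi}[\mathsf{LAT}^A_{\tau_j}]\big).$$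
   Context: A master tour is a tour from the root $r$ visiting all vertices. For an active set $A$, the master tour $\pi$ is shortcut to visit only $A$ in the same order starting from $r$; $\mathsf{LAT}^A_\pi(w)$ is the distance from $r$ to $w\in A$ along this shortcut tour, and $\mathsf{LAT}^A_\pi=\sum_{w\in A}\mathsf{LAT}^A_\pi(w)$. *)

theory Defs
  imports Main "HOL-Library.FuncSet" Complex_Main
begin

fun path_len :: "('a \<Rightarrow> 'a \<Rightarrow> real) \<Rightarrow> 'a list \<Rightarrow> real" where
  "path_len d (x # y # ys) = d x y + path_len d (y # ys)"
| "path_len d _ = 0"

definition shortcut :: "'a list \<Rightarrow> 'a set \<Rightarrow> 'a list" where
  "shortcut \<pi> A = filter (\<lambda>x. x \<in> A) \<pi>"

definition lat_vertex :: "('a \<Rightarrow> 'a \<Rightarrow> real) \<Rightarrow> 'a \<Rightarrow> 'a list \<Rightarrow> 'a set \<Rightarrow> 'a \<Rightarrow> real" where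
  "lat_vertex d r \<pi> A w = path_len d (r # takeWhile (\<lambda>x. x \<noteq> w) (shortcut \<pi> A) @ [w])"

definition LAT :: "('a \<Rightarrow> 'a \<Rightarrow> real) \<Rightarrow> 'a \<Rightarrow> 'a list \<Rightarrow> 'a set \<Rightarrow> real" where
  "LAT d r \<pi> A = (\<Sum>w\<in>A. lat_vertex d r \<pi> A w)"

definition exp_LAT :: "('a \<Rightarrow> 'a \<Rightarrow> real) \<Rightarrow> 'a \<Rightarrow> 'a list \<Rightarrow> 'a set \<Rightarrow> real \<Rightarrow> real" where
  "exp_LAT d r \<pi> V p =
     (\<Sum>A\<in>Pow V. p ^ card A * (1 - p) ^ (card V - card A) * LAT d r \<pi> A)"

text \<open>C is one of the parts of the minimal partition of S into sets of
  vertices appearing consecutively in tau, i.e. a maximal run of S-vertices.\<close>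
definition is_part :: "'a list \<Rightarrow> 'a set \<Rightarrow> 'a set \<Rightarrow> bool" where
  "is_part \<tau> S C \<longleftrightarrow> (\<exists>a b. a < b \<and> b \<le> length \<tau> \<and>
      C = set (take (b - a) (drop a \<tau>)) \<and>
      (\<forall>k\<in>{a..<b}. \<tau> ! k \<in> S) \<and>
      (a = 0 \<or> \<tau> ! (a - 1) \<notin> S) \<and>
      (b = length \<tau> \<or> \<tau> ! b \<notin> S))"

definition last_in :: "'a list \<Rightarrow> 'a set \<Rightarrow> 'a" where
  "last_in \<tau> C = \<tau> ! Max {k. k < length \<tau> \<and> \<tau> ! k \<in> C}"

definition first_in :: "'a list \<Rightarrow> 'a set \<Rightarrow> 'a" where
  "first_in \<tau> C = \<tau> ! Min {k. k < length \<tau> \<and> \<tau> ! k \<in> C}"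

definition move_after :: "'a list \<Rightarrow> 'a set \<Rightarrow> 'a set \<Rightarrow> 'a list" where
  "move_after \<tau> C D = concat (map (\<lambda>x. if x \<in> D then []
       else if x = last_in \<tau> C then x # filter (\<lambda>y. y \<in> D) \<tau> else [x]) \<tau>)"

definition move_before :: "'a list \<Rightarrow> 'a set \<Rightarrow> 'a set \<Rightarrow> 'a list" where
  "move_before \<tau> C D = concat (map (\<lambda>x. if x \<in> C then []
       else if x = first_in \<tau> D then filter (\<lambda>y. y \<in> C) \<tau> @ [x] else [x]) \<tau>)"

end

theory Submission
  imports Defs
begin


fun FL :: "('a \<Rightarrow> 'a \<Rightarrow> real) \<Rightarrow> 'a \<Rightarrow> 'a list \<Rightarrow> real" where
  "FL d c [] = 0"
| "FL d c (x # xs) = real (Suc (length xs)) * d c x + FL d x xs"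

lemma path_len_cons: "path_len d (x # xs) = (if xs = [] then 0 else d x (hd xs) + path_len d xs)"
  by (cases xs) auto

lemma sum_lat_FL:
  assumes "distinct s"
  shows "(\<Sum>w\<in>set s. path_len d (c # takeWhile (\<lambda>x. x \<noteq> w) s @ [w])) = FL d c s"
  using assms
proof (induction s arbitrary: c)
  case Nil then show ?case by simp
next
  case (Cons x xs)
  have fin: "finite (set xs)" by simp
  have xn: "x \<notin> set xs" using Cons.prems by simp
  have "(\<Sum>w\<in>set (x#xs). path_len d (c # takeWhile (\<lambda>y. y \<noteq> w) (x#xs) @ [w]))
      = d c x + (\<Sum>w\<in>set xs. path_len d (c # takeWhile (\<lambda>y. y \<noteq> w) (x#xs) @ [w]))"
    using xn by (simp add: sum.insert)
  also have "(\<Sum>w\<in>set xs. path_len d (c # takeWhile (\<lambda>y. y \<noteq> w) (x#xs) @ [w]))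
      = (\<Sum>w\<in>set xs. d c x + path_len d (x # takeWhile (\<lambda>y. y \<noteq> w) xs @ [w]))"
    by (rule sum.cong) (use xn in auto)
  also have "\<dots> = real (length xs) * d c x + FL d x xs"
    using Cons by (simp add: sum.distrib distinct_card)
  finally show ?case by (simp add: algebra_simps)
qed

lemma LAT_FL:
  assumes "distinct \<pi>" "A \<subseteq> set \<pi>"
  shows "LAT d r \<pi> A = FL d r (shortcut \<pi> A)"
proof -
  have "set (shortcut \<pi> A) = A" using assms by (auto simp: shortcut_def)
  then have "LAT d r \<pi> A = (\<Sum>w\<in>set (shortcut \<pi> A). lat_vertex d r \<pi> A w)"
    by (simp add: LAT_def)
  also have "\<dots> = FL d r (shortcut \<pi> A)"
    unfolding lat_vertex_def by (rule sum_lat_FL) (use assms in \<open>simp add: shortcut_def\<close>)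
  finally show ?thesis .
qed

lemma FL_append:
  "FL d c (xs @ ys) = FL d c xs + real (length ys) * path_len d (c # xs) + FL d (last (c # xs)) ys"
  by (induction xs arbitrary: c) (auto simp: algebra_simps)

lemma FL_cong_first:
  assumes "\<And>y. y \<in> set ys \<Longrightarrow> d c y = d c' y"
  shows "FL d c ys = FL d c' ys"
  using assms by (cases ys) auto

lemma FL_zero:
  assumes "\<And>u v. u \<in> set (c # Z) \<Longrightarrow> v \<in> set (c # Z) \<Longrightarrow> d u v = 0"
  shows "FL d c Z = 0 \<and> path_len d (c # Z) = 0"
  using assms
proof (induction Z arbitrary: c)
  case Nil then show ?case by simp
next
  case (Cons x xs)
  have "FL d x xs = 0 \<and> path_len d (x # xs) = 0" by (rule Cons.IH) (use Cons.prems in auto)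
  moreover have "d c x = 0" using Cons.prems by auto
  ultimately show ?case by simp
qed

locale blk =
  fixes d :: "'a \<Rightarrow> 'a \<Rightarrow> real" and r z0 :: 'a and K Zs :: "'a set"
  assumes sym: "\<And>x y. d x y = d y x"
    and tri: "\<And>x y w. d x w \<le> d x y + d y w"
    and nonneg: "\<And>x y. d x y \<ge> 0"
    and rK: "r \<in> K"
    and zeq: "\<And>u x. u \<in> Zs \<Longrightarrow> x \<in> K \<Longrightarrow> d u x = d z0 x"
    and z0: "\<And>u w. u \<in> Zs \<Longrightarrow> w \<in> Zs \<Longrightarrow> d u w = 0"
begin

definition ell :: "'a list \<Rightarrow> real" where
  "ell xs = path_len d (r # xs) + d (last (r # xs)) z0"

definition Dl :: "'a list \<Rightarrow> 'a list \<Rightarrow> real" where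
  "Dl xs ys = real (length ys) * d (last (r # xs)) z0 + FL d z0 ys - FL d (last (r # xs)) ys"

lemma Dl_nonneg: "Dl xs ys \<ge> 0"
proof (cases ys)
  case Nil then show ?thesis by (simp add: Dl_def)
next
  case (Cons y ys')
  define e where "e = last (r # xs)"
  have "d e y \<le> d e z0 + d z0 y" by (rule tri)
  then have "0 \<le> real (Suc (length ys')) * (d e z0 + d z0 y - d e y)" by simp
  then show ?thesis unfolding Dl_def e_def[symmetric] using Cons by (simp add: algebra_simps)
qed

lemma FL_block_start:
  assumes "Z \<noteq> []" "set Z \<subseteq> Zs" "c \<in> K" "set ys \<subseteq> K"
  shows "FL d c (Z @ ys) = real (length Z + length ys) * d c z0 + FL d z0 ys"
proof -
  obtain u Z' where Z: "Z = u # Z'" using assms(1) by (cases Z) auto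
  have uZ: "u \<in> Zs" using assms Z by auto
  have dcu: "d c u = d c z0" using zeq[OF uZ assms(3)] sym by metis
  have zz: "FL d u Z' = 0 \<and> path_len d (u # Z') = 0"
    by (rule FL_zero) (use assms(2) Z z0 in auto)
  have lZ: "last (u # Z') \<in> Zs" using assms(2) Z by (metis last_in_set list.distinct(1) subsetD)
  have "FL d (last (u # Z')) ys = FL d z0 ys"
    by (rule FL_cong_first) (use zeq[OF lZ] assms(4) in auto)
  then show ?thesis using Z dcu zz by (simp add: FL_append algebra_simps)
qed

lemma FL_block:
  assumes "set Z \<subseteq> Zs" "set xs \<subseteq> K" "set ys \<subseteq> K"
  shows "FL d r (xs @ Z @ ys) = FL d r (xs @ ys) + real (length Z) * ell xs
           + (if Z = [] then 0 else Dl xs ys)"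
proof (cases "Z = []")
  case True then show ?thesis by simp
next
  case False
  have lK: "last (r # xs) \<in> K" using assms(2) rK by (metis last_in_set list.distinct(1) set_ConsD subsetD)
  have "FL d r (xs @ Z @ ys) = FL d r xs + real (length (Z @ ys)) * path_len d (r # xs)
        + FL d (last (r # xs)) (Z @ ys)" by (rule FL_append)
  also have "FL d (last (r # xs)) (Z @ ys) = real (length Z + length ys) * d (last (r # xs)) z0 + FL d z0 ys"
    by (rule FL_block_start) (use False assms lK in auto)
  finally show ?thesis using False by (simp add: FL_append ell_def Dl_def algebra_simps)
qed

end

lemma path_len_insert1:
  assumes tri: "\<And>x y w. d x w \<le> d x y + d y w" and nn: "\<And>x y. d x y \<ge> (0::real)"
  shows "path_len d (xs @ z # ys) \<ge> path_len d (xs @ ys)"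
proof (induction xs)
  case Nil
  show ?case
  proof (cases ys)
    case Nil then show ?thesis by simp
  next
    case (Cons y ys') then show ?thesis using nn[of z y] by simp
  qed
next
  case (Cons x xs)
  show ?case
  proof (cases xs)
    case Nil
    then show ?thesis
    proof (cases ys)
      case Nil2: Nil then show ?thesis using Nil nn[of x z] by simp
    next
      case (Cons y ys') then show ?thesis using Nil tri[of x y z] tri[of x z y] by simp
    qed
  next
    case (Cons x' xs')
    then show ?thesis using Cons.IH by simp
  qed
qed

lemma path_len_insert:
  assumes tri: "\<And>x y w. d x w \<le> d x y + d y w" and nn: "\<And>x y. d x y \<ge> (0::real)"
  shows "path_len d (xs @ Z @ ys) \<ge> path_len d (xs @ ys)"
proof (induction Z arbitrary: xs)
  case Nil then show ?case by simp
next
  case (Cons z Z)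
  have "path_len d ((xs @ [z]) @ Z @ ys) \<ge> path_len d ((xs @ [z]) @ ys)" by (rule Cons.IH)
  moreover have "path_len d (xs @ z # ys) \<ge> path_len d (xs @ ys)" by (rule path_len_insert1[OF tri nn])
  ultimately show ?case by simp
qed



definition wt :: "real \<Rightarrow> 'a set \<Rightarrow> 'a set \<Rightarrow> real" where
  "wt p S A = p ^ card A * (1 - p) ^ (card S - card A)"

definition ew :: "real \<Rightarrow> 'a set \<Rightarrow> ('a set \<Rightarrow> real) \<Rightarrow> real" where
  "ew p S h = (\<Sum>A\<in>Pow S. wt p S A * h A)"

lemma sum_Pow_split:
  assumes "finite U" "finite W" "U \<inter> W = {}"
  shows "(\<Sum>A\<in>Pow (U \<union> W). f A) = (\<Sum>B\<in>Pow U. \<Sum>C\<in>Pow W. f (B \<union> C))"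
proof -
  have inj: "inj_on (\<lambda>(B, C). B \<union> C) (Pow U \<times> Pow W)"
    using assms(3) by (auto simp: inj_on_def) blast+
  have img: "(\<lambda>(B, C). B \<union> C) ` (Pow U \<times> Pow W) = Pow (U \<union> W)"
  proof
    show "Pow (U \<union> W) \<subseteq> (\<lambda>(B, C). B \<union> C) ` (Pow U \<times> Pow W)"
    proof
      fix A assume "A \<in> Pow (U \<union> W)"
      then have "A = (A \<inter> U) \<union> (A \<inter> W)" "(A \<inter> U, A \<inter> W) \<in> Pow U \<times> Pow W" by auto
      then show "A \<in> (\<lambda>(B, C). B \<union> C) ` (Pow U \<times> Pow W)" by (metis (no_types, lifting) case_prod_conv image_eqI)
    qed
  qed auto
  have "(\<Sum>A\<in>Pow (U \<union> W). f A) = (\<Sum>x\<in>Pow U \<times> Pow W. f ((\<lambda>(B, C). B \<union> C) x))"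
    using sum.reindex[OF inj, of f] img by simp
  also have "\<dots> = (\<Sum>B\<in>Pow U. \<Sum>C\<in>Pow W. f (B \<union> C))"
    by (simp add: sum.cartesian_product split_def)
  finally show ?thesis .
qed

lemma wt_split:
  assumes "finite U" "finite W" "U \<inter> W = {}" "B \<subseteq> U" "C \<subseteq> W"
  shows "wt p (U \<union> W) (B \<union> C) = wt p U B * wt p W C"
proof -
  have fB: "finite B" "finite C" using finite_subset[OF assms(4) assms(1)] finite_subset[OF assms(5) assms(2)] by auto
  have c1: "card (U \<union> W) = card U + card W" using assms(1,2,3) by (rule card_Un_disjoint)
  have c2: "card (B \<union> C) = card B + card C" using fB assms(3,4,5) by (intro card_Un_disjoint) auto
  have le: "card B \<le> card U" "card C \<le> card W" using card_mono[OF assms(1,4)] card_mono[OF assms(2,5)] by auto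
  have "card U + card W - (card B + card C) = (card U - card B) + (card W - card C)" using le by simp
  then show ?thesis unfolding wt_def c1 c2 by (simp add: power_add algebra_simps)
qed

lemma ew_split:
  assumes "finite U" "finite W" "U \<inter> W = {}"
  shows "ew p (U \<union> W) f = ew p U (\<lambda>B. ew p W (\<lambda>C. f (B \<union> C)))"
  unfolding ew_def sum_Pow_split[OF assms]
  by (rule sum.cong[OF refl]) (auto simp: sum_distrib_left wt_split[OF assms] mult.assoc intro!: sum.cong)

lemma ew_single: "ew p {x} h = (1 - p) * h {} + p * h {x}"
proof -
  have "Pow {x} = {{}, {x}}" by blast
  then show ?thesis by (simp add: ew_def wt_def)
qed

lemma ew_insert:
  assumes "finite S" "x \<notin> S"
  shows "ew p (insert x S) f = ew p S (\<lambda>B. (1 - p) * f B + p * f (insert x B))"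
proof -
  have "ew p (S \<union> {x}) f = ew p S (\<lambda>B. ew p {x} (\<lambda>C. f (B \<union> C)))"
    by (rule ew_split) (use assms in auto)
  then show ?thesis by (simp add: ew_single)
qed

lemma ew_add: "ew p S (\<lambda>A. f A + g A) = ew p S f + ew p S g"
  by (simp add: ew_def sum.distrib algebra_simps)

lemma ew_cmult: "ew p S (\<lambda>A. c * f A) = c * ew p S f"
  by (simp add: ew_def sum_distrib_left algebra_simps)

lemma ew_mono:
  assumes "0 \<le> p" "p \<le> 1" "\<And>A. A \<subseteq> S \<Longrightarrow> f A \<le> g A"
  shows "ew p S f \<le> ew p S g"
  unfolding ew_def
proof (rule sum_mono)
  fix A assume "A \<in> Pow S"
  moreover have "wt p S A \<ge> 0" using assms by (simp add: wt_def)
  ultimately show "wt p S A * f A \<le> wt p S A * g A" using assms by (simp add: mult_left_mono)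
qed

lemma ew_cong:
  assumes "\<And>A. A \<subseteq> S \<Longrightarrow> f A = g A"
  shows "ew p S f = ew p S g"
  unfolding ew_def using assms by (auto intro!: sum.cong)

lemma ew_const: "finite S \<Longrightarrow> ew p S (\<lambda>A. c) = c"
proof (induction S rule: finite_induct)
  case empty then show ?case by (simp add: ew_def wt_def)
next
  case (insert x F) then show ?case by (simp add: ew_insert algebra_simps)
qed

lemma ew_card: "finite S \<Longrightarrow> ew p S (\<lambda>A. real (card A)) = p * real (card S)"
proof (induction S rule: finite_induct)
  case empty then show ?case by (simp add: ew_def wt_def)
next
  case (insert x F)
  have "ew p (insert x F) (\<lambda>A. real (card A)) = ew p F (\<lambda>B. (1 - p) * real (card B) + p * real (card (insert x B)))"
    by (rule ew_insert) (use insert in auto)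
  also have "\<dots> = ew p F (\<lambda>B. real (card B) + p)"
  proof (rule ew_cong)
    fix B assume "B \<subseteq> F"
    then have "card (insert x B) = Suc (card B)" using insert finite_subset by (metis card_insert_disjoint subsetD)
    then show "(1 - p) * real (card B) + p * real (card (insert x B)) = real (card B) + p"
      by (simp add: algebra_simps)
  qed
  also have "\<dots> = p * real (card F) + p" using insert by (simp add: ew_add ew_const)
  finally show ?case using insert by (simp add: algebra_simps)
qed

lemma ew_empty_ind: "finite S \<Longrightarrow> ew p S (\<lambda>A. if A = {} then 1 else 0) = (1 - p) ^ card S"
proof -
  assume f: "finite S"
  have "ew p S (\<lambda>A. if A = {} then 1 else 0) = (\<Sum>A\<in>Pow S. if A = {} then wt p S A else 0)"
    unfolding ew_def by (rule sum.cong) auto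
  also have "\<dots> = wt p S {}" using f by (simp add: sum.delta')
  finally show ?thesis by (simp add: wt_def)
qed

lemma ew_nonempty_ind: "finite S \<Longrightarrow> ew p S (\<lambda>A. if A = {} then 0 else 1) = 1 - (1 - p) ^ card S"
proof -
  assume f: "finite S"
  have "ew p S (\<lambda>A. if A = {} then 0 else 1) = ew p S (\<lambda>A. 1 + (-1) * (if A = {} then 1 else 0))"
    by (rule ew_cong) auto
  also have "\<dots> = 1 + (-1) * (1 - p) ^ card S" using f by (simp only: ew_add ew_cmult ew_const ew_empty_ind)
  finally show ?thesis by simp
qed


lemma ew_restrict:
  assumes "finite S" "finite T" "S \<inter> T = {}"
  shows "ew p (S \<union> T) (\<lambda>C. f (C \<inter> S)) = ew p S f"
proof -
  have "ew p (S \<union> T) (\<lambda>C. f (C \<inter> S)) = ew p S (\<lambda>A. ew p T (\<lambda>A'. f ((A \<union> A') \<inter> S)))"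
    by (rule ew_split[OF assms])
  also have "\<dots> = ew p S (\<lambda>A. ew p T (\<lambda>A'. f A))"
  proof (rule ew_cong)
    fix A assume A: "A \<subseteq> S"
    show "ew p T (\<lambda>A'. f ((A \<union> A') \<inter> S)) = ew p T (\<lambda>A'. f A)"
    proof (rule ew_cong)
      fix A' assume "A' \<subseteq> T"
      then have "(A \<union> A') \<inter> S = A" using A assms(3) by blast
      then show "f ((A \<union> A') \<inter> S) = f A" by simp
    qed
  qed
  also have "\<dots> = ew p S f" using assms(2) by (simp add: ew_const)
  finally show ?thesis .
qed



lemma last_in_eq:
  assumes "\<tau> = \<alpha> @ x # \<beta>" "x \<in> C" "set \<beta> \<inter> C = {}"
  shows "last_in \<tau> C = x"
proof -
  let ?S = "{k. k < length \<tau> \<and> \<tau> ! k \<in> C}"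
  have "Max ?S = length \<alpha>"
  proof (rule Max_eqI)
    show "finite ?S" by simp
    show "length \<alpha> \<in> ?S" using assms by simp
    fix k assume k: "k \<in> ?S"
    show "k \<le> length \<alpha>"
    proof (rule ccontr)
      assume "\<not> k \<le> length \<alpha>"
      then have "\<tau> ! k = \<beta> ! (k - length \<alpha> - 1)" "k - length \<alpha> - 1 < length \<beta>"
        using k assms(1) by (auto simp: nth_append)
      then have "\<tau> ! k \<in> set \<beta>" by simp
      then show False using k assms(3) by auto
    qed
  qed
  then show ?thesis using assms by (simp add: last_in_def)
qed

lemma first_in_eq:
  assumes "\<tau> = \<alpha> @ x # \<beta>" "x \<in> C" "set \<alpha> \<inter> C = {}"
  shows "first_in \<tau> C = x"
proof -
  let ?S = "{k. k < length \<tau> \<and> \<tau> ! k \<in> C}"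
  have "Min ?S = length \<alpha>"
  proof (rule Min_eqI)
    show "finite ?S" by simp
    show "length \<alpha> \<in> ?S" using assms by simp
    fix k assume k: "k \<in> ?S"
    show "length \<alpha> \<le> k"
    proof (rule ccontr)
      assume "\<not> length \<alpha> \<le> k"
      then have "\<tau> ! k = \<alpha> ! k" "k < length \<alpha>"
        using assms(1) by (auto simp: nth_append)
      then have "\<tau> ! k \<in> set \<alpha>" by simp
      then show False using k assms(3) by auto
    qed
  qed
  then show ?thesis using assms by (simp add: first_in_def)
qed

lemma concat_map_single: "(\<And>x. x \<in> set xs \<Longrightarrow> f x = [x]) \<Longrightarrow> concat (map f xs) = xs"
  by (induction xs) auto

lemma concat_map_nil: "(\<And>x. x \<in> set xs \<Longrightarrow> f x = []) \<Longrightarrow> concat (map f xs) = []"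
  by (induction xs) auto

lemma concat_map_last:
  assumes "xs \<noteq> []" "distinct xs" "\<And>x. x \<in> set xs \<Longrightarrow> x \<noteq> last xs \<Longrightarrow> f x = [x]"
    "f (last xs) = last xs # ys"
  shows "concat (map f xs) = xs @ ys"
proof -
  have xs: "xs = butlast xs @ [last xs]" using assms(1) by simp
  have "last xs \<notin> set (butlast xs)" using assms(1,2) xs by (metis distinct_append disjoint_iff list.set_intros(1))
  then have "concat (map f (butlast xs)) = butlast xs"
  proof (intro concat_map_single)
    fix x assume "last xs \<notin> set (butlast xs)" "x \<in> set (butlast xs)"
    then show "f x = [x]" using assms(3) by (metis in_set_butlastD)
  qed
  then have "concat (map f (butlast xs @ [last xs])) = butlast xs @ last xs # ys" using assms(4) by simp
  then show ?thesis using xs by (metis append.assoc append_Cons append_Nil)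
qed

lemma concat_map_first:
  assumes "xs \<noteq> []" "distinct xs" "\<And>x. x \<in> set xs \<Longrightarrow> x \<noteq> hd xs \<Longrightarrow> f x = [x]"
    "f (hd xs) = ys @ [hd xs]"
  shows "concat (map f xs) = ys @ xs"
proof -
  obtain h t where xs: "xs = h # t" using assms(1) by (cases xs) auto
  have "concat (map f t) = t"
    using assms(2,3) xs by (intro concat_map_single) auto
  then show ?thesis using xs assms(4) by simp
qed

context
  fixes \<tau> \<alpha> X \<beta> Y \<gamma> :: "'a list"
  assumes tau: "\<tau> = \<alpha> @ X @ \<beta> @ Y @ \<gamma>" and dist: "distinct \<tau>" and X: "X \<noteq> []" and Y: "Y \<noteq> []"
begin

lemma filt_X: "filter (\<lambda>y. y \<in> set X) \<tau> = X"
proof -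
  have "filter (\<lambda>y. y \<in> set X) \<alpha> = []" "filter (\<lambda>y. y \<in> set X) \<beta> = []"
       "filter (\<lambda>y. y \<in> set X) Y = []" "filter (\<lambda>y. y \<in> set X) \<gamma> = []"
    using dist tau by (auto simp: filter_empty_conv)
  moreover have "filter (\<lambda>y. y \<in> set X) X = X" by simp
  ultimately show ?thesis using tau by simp
qed

lemma filt_Y: "filter (\<lambda>y. y \<in> set Y) \<tau> = Y"
proof -
  have "filter (\<lambda>y. y \<in> set Y) \<alpha> = []" "filter (\<lambda>y. y \<in> set Y) \<beta> = []"
       "filter (\<lambda>y. y \<in> set Y) X = []" "filter (\<lambda>y. y \<in> set Y) \<gamma> = []"
    using dist tau by (auto simp: filter_empty_conv)
  moreover have "filter (\<lambda>y. y \<in> set Y) Y = Y" by simp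
  ultimately show ?thesis using tau by simp
qed

lemma L1: "move_after \<tau> (set X) (set Y) = \<alpha> @ X @ Y @ \<beta> @ \<gamma>"
proof -
  have li: "last_in \<tau> (set X) = last X"
    by (rule last_in_eq[where \<alpha> = "\<alpha> @ butlast X" and \<beta> = "\<beta> @ Y @ \<gamma>"])
       (use tau X dist in \<open>auto simp: append_butlast_last_id\<close>)
  define f where "f = (\<lambda>x. if x \<in> set Y then [] else if x = last X then x # Y else [x])"
  have mv: "move_after \<tau> (set X) (set Y) = concat (map f \<tau>)"
    unfolding move_after_def li filt_Y f_def ..
  have lX: "last X \<in> set X" using X by simp
  have "concat (map f \<alpha>) = \<alpha>" "concat (map f \<beta>) = \<beta>" "concat (map f \<gamma>) = \<gamma>" "concat (map f Y) = []"
    using dist tau lX by (auto simp: f_def intro!: concat_map_single concat_map_nil)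
  moreover have nY: "last X \<notin> set Y" using dist tau lX by auto
  moreover have "concat (map f X) = X @ Y"
    using dist tau X nY by (intro concat_map_last) (auto simp: f_def)
  ultimately show ?thesis using mv tau by simp
qed

lemma L2: "move_after \<tau> (set Y) (set X) = \<alpha> @ \<beta> @ Y @ X @ \<gamma>"
proof -
  have li: "last_in \<tau> (set Y) = last Y"
    by (rule last_in_eq[where \<alpha> = "\<alpha> @ X @ \<beta> @ butlast Y" and \<beta> = "\<gamma>"])
       (use tau Y dist in \<open>auto simp: append_butlast_last_id\<close>)
  define f where "f = (\<lambda>x. if x \<in> set X then [] else if x = last Y then x # X else [x])"
  have mv: "move_after \<tau> (set Y) (set X) = concat (map f \<tau>)"
    unfolding move_after_def li filt_X f_def ..
  have lY: "last Y \<in> set Y" using Y by simp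
  have "concat (map f \<alpha>) = \<alpha>" "concat (map f \<beta>) = \<beta>" "concat (map f \<gamma>) = \<gamma>" "concat (map f X) = []"
    using dist tau lY by (auto simp: f_def intro!: concat_map_single concat_map_nil)
  moreover have "concat (map f Y) = Y @ X"
    using dist tau Y by (intro concat_map_last) (auto simp: f_def)
  ultimately show ?thesis using mv tau by simp
qed

lemma L3: "move_before \<tau> (set X) (set Y) = \<alpha> @ \<beta> @ X @ Y @ \<gamma>"
proof -
  have fi: "first_in \<tau> (set Y) = hd Y"
    by (rule first_in_eq[where \<alpha> = "\<alpha> @ X @ \<beta>" and \<beta> = "tl Y @ \<gamma>"])
       (use tau Y dist in auto)
  define f where "f = (\<lambda>x. if x \<in> set X then [] else if x = hd Y then X @ [x] else [x])"
  have mv: "move_before \<tau> (set X) (set Y) = concat (map f \<tau>)"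
    unfolding move_before_def fi filt_X f_def ..
  have hY: "hd Y \<in> set Y" using Y by simp
  have "concat (map f \<alpha>) = \<alpha>" "concat (map f \<beta>) = \<beta>" "concat (map f \<gamma>) = \<gamma>" "concat (map f X) = []"
    using dist tau hY by (auto simp: f_def intro!: concat_map_single concat_map_nil)
  moreover have "concat (map f Y) = X @ Y"
    using dist tau Y by (intro concat_map_first) (auto simp: f_def)
  ultimately show ?thesis using mv tau by simp
qed

lemma L4: "move_before \<tau> (set Y) (set X) = \<alpha> @ Y @ X @ \<beta> @ \<gamma>"
proof -
  have fi: "first_in \<tau> (set X) = hd X"
    by (rule first_in_eq[where \<alpha> = "\<alpha>" and \<beta> = "tl X @ \<beta> @ Y @ \<gamma>"])
       (use tau X dist in auto)
  define f where "f = (\<lambda>x. if x \<in> set Y then [] else if x = hd X then Y @ [x] else [x])"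
  have mv: "move_before \<tau> (set Y) (set X) = concat (map f \<tau>)"
    unfolding move_before_def fi filt_Y f_def ..
  have hX: "hd X \<in> set X" using X by simp
  have "concat (map f \<alpha>) = \<alpha>" "concat (map f \<beta>) = \<beta>" "concat (map f \<gamma>) = \<gamma>" "concat (map f Y) = []"
    using dist tau hX by (auto simp: f_def intro!: concat_map_single concat_map_nil)
  moreover have nY: "hd X \<notin> set Y" using dist tau hX by auto
  moreover have "concat (map f X) = Y @ X"
    using dist tau X nY by (intro concat_map_first) (auto simp: f_def)
  ultimately show ?thesis using mv tau by simp
qed

end

lemma split3: "i \<le> j \<Longrightarrow> xs = take i xs @ take (j - i) (drop i xs) @ drop j xs"
proof -
  assume "i \<le> j"
  then have "drop (j - i) (drop i xs) = drop j xs" by simp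
  then show ?thesis by (metis append_take_drop_id)
qed

lemma parts_order:
  assumes "is_part \<tau> S C1" "is_part \<tau> S C2" "C1 \<noteq> C2"
  obtains a1 b1 a2 b2 where "a1 < b1" "b1 \<le> a2" "a2 < b2" "b2 \<le> length \<tau>"
    "(C1 = set (take (b1 - a1) (drop a1 \<tau>)) \<and> C2 = set (take (b2 - a2) (drop a2 \<tau>))) \<or>
     (C2 = set (take (b1 - a1) (drop a1 \<tau>)) \<and> C1 = set (take (b2 - a2) (drop a2 \<tau>)))"
proof -
  obtain a b where ab: "a < b" "b \<le> length \<tau>" "C1 = set (take (b - a) (drop a \<tau>))"
      "\<forall>k\<in>{a..<b}. \<tau> ! k \<in> S" "a = 0 \<or> \<tau> ! (a - 1) \<notin> S" "b = length \<tau> \<or> \<tau> ! b \<notin> S"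
    using assms(1) unfolding is_part_def by blast
  obtain a' b' where ab': "a' < b'" "b' \<le> length \<tau>" "C2 = set (take (b' - a') (drop a' \<tau>))"
      "\<forall>k\<in>{a'..<b'}. \<tau> ! k \<in> S" "a' = 0 \<or> \<tau> ! (a' - 1) \<notin> S" "b' = length \<tau> \<or> \<tau> ! b' \<notin> S"
    using assms(2) unfolding is_part_def by blast
  consider "a < a'" | "a' < a" | "a = a'" by arith
  then show ?thesis
  proof cases
    case 1
    have "b \<le> a'"
    proof (rule ccontr)
      assume "\<not> b \<le> a'"
      then have "a' - 1 \<in> {a..<b}" using 1 by auto
      then show False using ab'(5) ab(4) 1 by auto
    qed
    then show ?thesis using that ab ab' by blast
  next
    case 2
    have "b' \<le> a"
    proof (rule ccontr)
      assume "\<not> b' \<le> a"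
      then have "a - 1 \<in> {a'..<b'}" using 2 by auto
      then show False using ab(5) ab'(4) 2 by auto
    qed
    then show ?thesis using that ab ab' by blast
  next
    case 3
    have "b = b'"
    proof (rule ccontr)
      assume "b \<noteq> b'"
      then consider "b < b'" | "b' < b" by arith
      then show False
      proof cases
        case 1
        then have "b \<in> {a'..<b'}" using 3 ab by auto
        then show False using ab(6) ab'(4) ab'(2) 1 by auto
      next
        case 2
        then have "b' \<in> {a..<b}" using 3 ab' by auto
        then show False using ab'(6) ab(4) ab(2) 2 by auto
      qed
    qed
    then show ?thesis using 3 ab ab' assms(3) by simp
  qed
qed



lemma concav:
  fixes q :: real and a b :: nat
  assumes "0 \<le> q" "q \<le> 1"
  shows "real a * (1 - q ^ (a + b)) \<le> real (a + b) * (1 - q ^ a)"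
proof -
  have s: "(\<Sum>i<a + b. q ^ i) = (\<Sum>i<a. q ^ i) + (\<Sum>i\<in>{a..<a+b}. q ^ i)"
    by (metis add.commute le_add2 sum.atLeastLessThan_concat atLeast0LessThan le0)
  have lo: "real (card {..<a}) * q ^ a \<le> (\<Sum>i<a. q ^ i)"
    by (rule sum_bounded_below) (use assms in \<open>auto intro: power_decreasing\<close>)
  have hi: "(\<Sum>i\<in>{a..<a+b}. q ^ i) \<le> real (card {a..<a+b}) * q ^ a"
    by (rule sum_bounded_above) (use assms in \<open>auto intro: power_decreasing\<close>)
  have "real a * (\<Sum>i\<in>{a..<a+b}. q ^ i) \<le> real a * (real b * q ^ a)"
    using hi by (intro mult_left_mono) auto
  also have "\<dots> = real b * (real a * q ^ a)" by simp
  also have "\<dots> \<le> real b * (\<Sum>i<a. q ^ i)" using lo by (intro mult_left_mono) auto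
  finally have key: "real a * (\<Sum>i<a + b. q ^ i) \<le> real (a + b) * (\<Sum>i<a. q ^ i)"
    unfolding s by (simp add: algebra_simps)
  have "real a * (1 - q ^ (a + b)) = (1 - q) * (real a * (\<Sum>i<a + b. q ^ i))"
    by (simp add: one_diff_power_eq[of q "a+b"])
  also have "\<dots> \<le> (1 - q) * (real (a + b) * (\<Sum>i<a. q ^ i))"
    using key assms by (intro mult_left_mono) auto
  also have "\<dots> = real (a + b) * (1 - q ^ a)"
    by (simp add: one_diff_power_eq[of q a])
  finally show ?thesis .
qed



lemma core:
  fixes d :: "'a \<Rightarrow> 'a \<Rightarrow> real" and r z0 :: 'a and Zs :: "'a set"
    and \<tau> \<alpha> X \<beta> Y \<gamma> M :: "'a list" and p :: real
  assumes sym: "\<And>x y. d x y = d y x" and tri: "\<And>x y w. d x w \<le> d x y + d y w"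
    and nn: "\<And>x y. d x y \<ge> 0"
    and tau: "\<tau> = \<alpha> @ X @ \<beta> @ Y @ \<gamma>" and dist: "distinct \<tau>" and X: "X \<noteq> []" and Y: "Y \<noteq> []"
    and M: "distinct M" "set M = set X \<union> set Y"
    and ZX: "set X \<subseteq> Zs" and ZY: "set Y \<subseteq> Zs"
    and zeq: "\<And>u x. u \<in> Zs \<Longrightarrow> x \<in> insert r (set \<tau>) \<Longrightarrow> d u x = d z0 x"
    and zz: "\<And>u w. u \<in> Zs \<Longrightarrow> w \<in> Zs \<Longrightarrow> d u w = 0"
    and p: "0 \<le> p" "p \<le> 1"
  shows "min (exp_LAT d r (\<alpha> @ M @ \<beta> @ \<gamma>) (set \<tau>) p) (exp_LAT d r (\<alpha> @ \<beta> @ M @ \<gamma>) (set \<tau>) p)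
           \<le> exp_LAT d r \<tau> (set \<tau>) p"
proof -
  interpret blk d r z0 "insert r (set \<tau>)" Zs
    apply unfold_locales
         apply (rule sym)
        apply (rule tri)
       apply (rule nn)
      apply simp
     apply (erule zeq, assumption)
    apply (erule zz, assumption)
    done
  define U where "U = set \<alpha> \<union> set \<beta> \<union> set \<gamma>"
  define W where "W = set X \<union> set Y"
  define t1 where "t1 = \<alpha> @ M @ \<beta> @ \<gamma>"
  define t2 where "t2 = \<alpha> @ \<beta> @ M @ \<gamma>"
  define a where "a = length X"
  define b where "b = length Y"
  define q where "q = 1 - p"
  have q: "0 \<le> q" "q \<le> 1" using p by (auto simp: q_def)
  have V: "set \<tau> = U \<union> W" using tau by (auto simp: U_def W_def)
  have UW: "U \<inter> W = {}" using dist tau by (auto simp: U_def W_def)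
  have XY: "set X \<inter> set Y = {}" using dist tau by auto
  have fin: "finite U" "finite W" "finite (set X)" "finite (set Y)" by (auto simp: U_def W_def)
  have ca: "card (set X) = a" "card (set Y) = b" using dist tau by (auto simp: a_def b_def distinct_card)
  have cW: "card W = a + b" unfolding W_def using ca XY by (simp add: card_Un_disjoint)
  have d1: "distinct t1" "distinct t2" using dist tau M by (auto simp: t1_def t2_def)
  have s1: "set t1 = set \<tau>" "set t2 = set \<tau>" using tau M by (auto simp: t1_def t2_def)
  have expeq: "exp_LAT d r \<pi> (set \<tau>) p = ew p U (\<lambda>B. ew p W (\<lambda>C. LAT d r \<pi> (B \<union> C)))" for \<pi>
  proof -
    have "exp_LAT d r \<pi> (set \<tau>) p = ew p (U \<union> W) (LAT d r \<pi>)"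
      unfolding V exp_LAT_def ew_def wt_def by simp
    also have "\<dots> = ew p U (\<lambda>B. ew p W (\<lambda>C. LAT d r \<pi> (B \<union> C)))"
      by (rule ew_split[OF fin(1,2) UW])
    finally show ?thesis .
  qed
  have perB: "real (a + b) * ew p W (\<lambda>C. LAT d r \<tau> (B \<union> C))
     \<ge> real a * ew p W (\<lambda>C. LAT d r t1 (B \<union> C)) + real b * ew p W (\<lambda>C. LAT d r t2 (B \<union> C))"
    if B: "B \<subseteq> U" for B
  proof -
    define b1 where "b1 = filter (\<lambda>x. x \<in> B) \<alpha>"
    define b2 where "b2 = filter (\<lambda>x. x \<in> B) \<beta>"
    define b3 where "b3 = filter (\<lambda>x. x \<in> B) \<gamma>"
    let ?K = "insert r (set \<tau>)"
    have K: "set b1 \<subseteq> ?K" "set b2 \<subseteq> ?K" "set b3 \<subseteq> ?K"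
      using tau by (auto simp: b1_def b2_def b3_def)
    have ZC: "set (filter (\<lambda>x. x \<in> C) X) \<subseteq> Zs" "set (filter (\<lambda>x. x \<in> C) Y) \<subseteq> Zs"
      "set (filter (\<lambda>x. x \<in> C) M) \<subseteq> Zs" for C
      using ZX ZY M by auto
    have fa: "filter (\<lambda>x. x \<in> B \<union> C) \<alpha> = b1" "filter (\<lambda>x. x \<in> B \<union> C) \<beta> = b2"
       "filter (\<lambda>x. x \<in> B \<union> C) \<gamma> = b3" if "C \<subseteq> W" for C
      unfolding b1_def b2_def b3_def using that UW
      by (auto intro!: filter_cong simp: U_def W_def)
    have fx: "filter (\<lambda>x. x \<in> B \<union> C) X = filter (\<lambda>x. x \<in> C) X"
       "filter (\<lambda>x. x \<in> B \<union> C) Y = filter (\<lambda>x. x \<in> C) Y"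
       "filter (\<lambda>x. x \<in> B \<union> C) M = filter (\<lambda>x. x \<in> C) M" if "C \<subseteq> W" for C
      using B UW M by (auto intro!: filter_cong simp: U_def W_def)
    have sub: "B \<union> C \<subseteq> set \<tau>" if "C \<subseteq> W" for C using that B V by auto
    have LT: "LAT d r \<tau> (B \<union> C) = FL d r (b1 @ filter (\<lambda>x. x \<in> C) X @ b2 @ filter (\<lambda>x. x \<in> C) Y @ b3)"
      if "C \<subseteq> W" for C
      using LAT_FL[OF dist sub[OF that], of d r] fa[OF that] fx[OF that]
      by (simp add: shortcut_def tau)
    have LT1: "LAT d r t1 (B \<union> C) = FL d r (b1 @ filter (\<lambda>x. x \<in> C) M @ (b2 @ b3))"
      if "C \<subseteq> W" for C
      using LAT_FL[OF d1(1), of "B \<union> C" d r] sub[OF that] s1 fa[OF that] fx[OF that]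
      by (simp add: shortcut_def t1_def)
    have LT2: "LAT d r t2 (B \<union> C) = FL d r ((b1 @ b2) @ filter (\<lambda>x. x \<in> C) M @ b3)"
      if "C \<subseteq> W" for C
      using LAT_FL[OF d1(2), of "B \<union> C" d r] sub[OF that] s1 fa[OF that] fx[OF that]
      by (simp add: shortcut_def t2_def)
    have lenM: "length (filter (\<lambda>x. x \<in> C) M) = card C" if "C \<subseteq> W" for C
    proof -
      have "{x. x \<in> C} \<inter> set M = C" using that M by (auto simp: W_def)
      then show ?thesis using distinct_length_filter[OF M(1)] by simp
    qed
    have lenX: "length (filter (\<lambda>x. x \<in> C) X) = card (C \<inter> set X)" for C
    proof -
      have "distinct X" using dist tau by simp
      then show ?thesis using distinct_length_filter[of X] by (simp add: Int_def conj_commute)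
    qed
    have lenY: "length (filter (\<lambda>x. x \<in> C) Y) = card (C \<inter> set Y)" for C
    proof -
      have "distinct Y" using dist tau by simp
      then show ?thesis using distinct_length_filter[of Y] by (simp add: Int_def conj_commute)
    qed
    have emM: "(filter (\<lambda>x. x \<in> C) M = []) = (C = {})" if "C \<subseteq> W" for C
      using that M by (auto simp: filter_empty_conv W_def)
    have emX: "(filter (\<lambda>x. x \<in> C) X = []) = (C \<inter> set X = {})" for C
      by (auto simp: filter_empty_conv)
    have emY: "(filter (\<lambda>x. x \<in> C) Y = []) = (C \<inter> set Y = {})" for C
      by (auto simp: filter_empty_conv)
    define W0 where "W0 = FL d r (b1 @ b2 @ b3)"
    define l1 where "l1 = ell b1"
    define D1 where "D1 = Dl b1 (b2 @ b3)"
    define l2 where "l2 = ell (b1 @ b2)"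
    define D2 where "D2 = Dl (b1 @ b2) b3"
    define ind :: "'a set \<Rightarrow> real" where "ind S = (if S = {} then 0 else 1)" for S
    have D12: "D1 \<ge> 0" "D2 \<ge> 0" unfolding D1_def D2_def by (rule Dl_nonneg)+
    have V1: "LAT d r t1 (B \<union> C) = W0 + real (card C) * l1 + ind C * D1" if "C \<subseteq> W" for C
      unfolding LT1[OF that] using K
      by (subst FL_block[OF ZC(3)]) (auto simp: W0_def l1_def D1_def ind_def lenM[OF that] emM[OF that])
    have V2: "LAT d r t2 (B \<union> C) = W0 + real (card C) * l2 + ind C * D2" if "C \<subseteq> W" for C
      unfolding LT2[OF that] using K
      by (subst FL_block[OF ZC(3)]) (auto simp: W0_def l2_def D2_def ind_def lenM[OF that] emM[OF that])
    have E1: "ew p W (\<lambda>C. LAT d r t1 (B \<union> C)) = W0 + p * real (a + b) * l1 + (1 - q ^ (a + b)) * D1"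
    proof -
      have "ew p W (\<lambda>C. LAT d r t1 (B \<union> C)) = ew p W (\<lambda>C. W0 + l1 * real (card C) + D1 * ind C)"
        by (rule ew_cong) (simp add: V1 algebra_simps)
      also have "\<dots> = W0 + l1 * (p * real (card W)) + D1 * (1 - (1 - p) ^ card W)"
        using fin by (simp add: ew_add ew_cmult ew_const ew_card ind_def ew_nonempty_ind)
      finally show ?thesis by (simp add: cW q_def algebra_simps)
    qed
    have E2: "ew p W (\<lambda>C. LAT d r t2 (B \<union> C)) = W0 + p * real (a + b) * l2 + (1 - q ^ (a + b)) * D2"
    proof -
      have "ew p W (\<lambda>C. LAT d r t2 (B \<union> C)) = ew p W (\<lambda>C. W0 + l2 * real (card C) + D2 * ind C)"
        by (rule ew_cong) (simp add: V2 algebra_simps)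
      also have "\<dots> = W0 + l2 * (p * real (card W)) + D2 * (1 - (1 - p) ^ card W)"
        using fin by (simp add: ew_add ew_cmult ew_const ew_card ind_def ew_nonempty_ind)
      finally show ?thesis by (simp add: cW q_def algebra_simps)
    qed
    show ?thesis
    proof (cases "b2 = []")
      case True
      have "LAT d r \<tau> (B \<union> C) = LAT d r t1 (B \<union> C)" if "C \<subseteq> W" for C
      proof -
        have "LAT d r \<tau> (B \<union> C) = FL d r (b1 @ (filter (\<lambda>x. x \<in> C) X @ filter (\<lambda>x. x \<in> C) Y) @ b3)"
          using LT[OF that] True by simp
        also have "\<dots> = W0 + real (card C) * l1 + ind C * D1"
        proof -
          have cc: "card (C \<inter> set X) + card (C \<inter> set Y) = card C"
          proof -
            have "C = (C \<inter> set X) \<union> (C \<inter> set Y)" using that by (auto simp: W_def)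
            moreover have "finite (C \<inter> set X)" "finite (C \<inter> set Y)" by auto
            ultimately show ?thesis using XY card_Un_disjoint by (metis Int_Un_distrib inf_commute inf_sup_absorb inf_bot_right inf_left_commute)
          qed
          have ee: "(filter (\<lambda>x. x \<in> C) X @ filter (\<lambda>x. x \<in> C) Y = []) = (C = {})"
            using that by (auto simp: filter_empty_conv W_def)
          show ?thesis using K ZC(1,2) that
            by (subst FL_block) (auto simp: W0_def l1_def D1_def ind_def True lenX lenY cc ee emX emY W_def)
        qed
        also have "\<dots> = LAT d r t1 (B \<union> C)" using V1[OF that] by simp
        finally show ?thesis .
      qed
      then have eT: "ew p W (\<lambda>C. LAT d r \<tau> (B \<union> C)) = ew p W (\<lambda>C. LAT d r t1 (B \<union> C))"
        by (intro ew_cong) auto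
      have "l1 = l2" "D1 = D2" using True by (simp_all add: l1_def l2_def D1_def D2_def)
      then have "ew p W (\<lambda>C. LAT d r t2 (B \<union> C)) = ew p W (\<lambda>C. LAT d r t1 (B \<union> C))"
        using E1 E2 by simp
      then show ?thesis using eT by (simp add: algebra_simps)
    next
      case False
      have low: "LAT d r \<tau> (B \<union> C) \<ge> W0 + real (card (C \<inter> set X)) * l1 + ind (C \<inter> set X) * D1
                   + (real (card (C \<inter> set Y)) * l2 + ind (C \<inter> set Y) * D2)" if "C \<subseteq> W" for C
      proof -
        let ?Z1 = "filter (\<lambda>x. x \<in> C) X" and ?Z2 = "filter (\<lambda>x. x \<in> C) Y"
        have KZ1: "set ?Z1 \<subseteq> ?K" using tau by auto
        have lst: "last (r # b1 @ ?Z1 @ b2) = last (r # b1 @ b2)" using False by simp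
        have "LAT d r \<tau> (B \<union> C) = FL d r ((b1 @ ?Z1 @ b2) @ ?Z2 @ b3)"
          using LT[OF that] by simp
        also have "\<dots> = FL d r ((b1 @ ?Z1 @ b2) @ b3) + real (length ?Z2) * ell (b1 @ ?Z1 @ b2)
              + (if ?Z2 = [] then 0 else Dl (b1 @ ?Z1 @ b2) b3)"
          by (rule FL_block[OF ZC(2)]) (use K KZ1 in auto)
        also have "FL d r ((b1 @ ?Z1 @ b2) @ b3) = FL d r (b1 @ ?Z1 @ (b2 @ b3))" by simp
        also have "\<dots> = W0 + real (length ?Z1) * l1 + (if ?Z1 = [] then 0 else D1)"
          unfolding W0_def l1_def D1_def by (rule FL_block[OF ZC(1)]) (use K in auto)
        also have "Dl (b1 @ ?Z1 @ b2) b3 = D2" unfolding D2_def Dl_def lst by simp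
        finally have eq: "LAT d r \<tau> (B \<union> C) = W0 + real (length ?Z1) * l1 + (if ?Z1 = [] then 0 else D1)
              + real (length ?Z2) * ell (b1 @ ?Z1 @ b2) + (if ?Z2 = [] then 0 else D2)" by simp
        have "path_len d ((r # b1) @ ?Z1 @ b2) \<ge> path_len d ((r # b1) @ b2)"
          by (rule path_len_insert[OF tri nn])
        then have "ell (b1 @ ?Z1 @ b2) \<ge> l2" unfolding ell_def l2_def lst by simp
        then have "real (length ?Z2) * ell (b1 @ ?Z1 @ b2) \<ge> real (length ?Z2) * l2"
          by (intro mult_left_mono) auto
        then show ?thesis unfolding eq lenX lenY emX emY ind_def by simp
      qed
      have "ew p W (\<lambda>C. LAT d r \<tau> (B \<union> C)) \<ge> ew p W (\<lambda>C. W0 + real (card (C \<inter> set X)) * l1 + ind (C \<inter> set X) * D1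
                   + (real (card (C \<inter> set Y)) * l2 + ind (C \<inter> set Y) * D2))"
        by (rule ew_mono[OF p]) (rule low)
      also have "ew p W (\<lambda>C. W0 + real (card (C \<inter> set X)) * l1 + ind (C \<inter> set X) * D1
                   + (real (card (C \<inter> set Y)) * l2 + ind (C \<inter> set Y) * D2))
           = ew p (set X) (\<lambda>A. W0 + real (card A) * l1 + ind A * D1)
             + ew p (set Y) (\<lambda>A. real (card A) * l2 + ind A * D2)"
      proof -
        have r1: "ew p W (\<lambda>C. (\<lambda>A. W0 + real (card A) * l1 + ind A * D1) (C \<inter> set X)) = ew p (set X) (\<lambda>A. W0 + real (card A) * l1 + ind A * D1)"
          unfolding W_def by (rule ew_restrict[OF fin(3,4) XY])
        have r2: "ew p W (\<lambda>C. (\<lambda>A. real (card A) * l2 + ind A * D2) (C \<inter> set Y)) = ew p (set Y) (\<lambda>A. real (card A) * l2 + ind A * D2)"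
          unfolding W_def Un_commute[of "set X"] by (rule ew_restrict[OF fin(4,3)]) (use XY in auto)
        show ?thesis using r1 r2 by (simp add: ew_add)
      qed
      also have "\<dots> = W0 + p * real a * l1 + (1 - q ^ a) * D1 + (p * real b * l2 + (1 - q ^ b) * D2)"
        using fin ca by (simp add: ew_add ew_cmult ew_const ew_card ind_def ew_nonempty_ind q_def algebra_simps)
      finally have ET: "ew p W (\<lambda>C. LAT d r \<tau> (B \<union> C)) \<ge> W0 + p * real a * l1 + (1 - q ^ a) * D1 + (p * real b * l2 + (1 - q ^ b) * D2)" .
      have c1: "real a * (1 - q ^ (a + b)) \<le> real (a + b) * (1 - q ^ a)" by (rule concav[OF q])
      have c2: "real b * (1 - q ^ (a + b)) \<le> real (a + b) * (1 - q ^ b)"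
        using concav[OF q, of b a] by (simp add: add.commute)
      have m1: "D1 * (real a * (1 - q ^ (a + b))) \<le> D1 * (real (a + b) * (1 - q ^ a))"
        using c1 D12 by (intro mult_left_mono) auto
      have m2: "D2 * (real b * (1 - q ^ (a + b))) \<le> D2 * (real (a + b) * (1 - q ^ b))"
        using c2 D12 by (intro mult_left_mono) auto
      have "real a * (W0 + p * real (a + b) * l1 + (1 - q ^ (a + b)) * D1) + real b * (W0 + p * real (a + b) * l2 + (1 - q ^ (a + b)) * D2)
          \<le> real (a + b) * (W0 + p * real a * l1 + (1 - q ^ a) * D1 + (p * real b * l2 + (1 - q ^ b) * D2))"
        using m1 m2 by (simp add: algebra_simps)
      also have "\<dots> \<le> real (a + b) * ew p W (\<lambda>C. LAT d r \<tau> (B \<union> C))"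
        using ET by (intro mult_left_mono) auto
      finally show ?thesis using E1 E2 by simp
    qed
  qed
  have "real a * exp_LAT d r t1 (set \<tau>) p + real b * exp_LAT d r t2 (set \<tau>) p
        = ew p U (\<lambda>B. real a * ew p W (\<lambda>C. LAT d r t1 (B \<union> C)) + real b * ew p W (\<lambda>C. LAT d r t2 (B \<union> C)))"
    unfolding expeq by (simp add: ew_add ew_cmult)
  also have "\<dots> \<le> ew p U (\<lambda>B. real (a + b) * ew p W (\<lambda>C. LAT d r \<tau> (B \<union> C)))"
    by (rule ew_mono[OF p]) (rule perB)
  also have "\<dots> = real (a + b) * exp_LAT d r \<tau> (set \<tau>) p"
    unfolding expeq by (simp add: ew_cmult)
  finally have fin_ineq: "real a * exp_LAT d r t1 (set \<tau>) p + real b * exp_LAT d r t2 (set \<tau>) p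
      \<le> real (a + b) * exp_LAT d r \<tau> (set \<tau>) p" .
  have apos: "a > 0" using X by (simp add: a_def)
  have bpos: "b > 0" using Y by (simp add: b_def)
  let ?E1 = "exp_LAT d r t1 (set \<tau>) p" and ?E2 = "exp_LAT d r t2 (set \<tau>) p" and ?E = "exp_LAT d r \<tau> (set \<tau>) p"
  have "real (a + b) * min ?E1 ?E2 \<le> real a * ?E1 + real b * ?E2"
  proof -
    have "real a * min ?E1 ?E2 \<le> real a * ?E1" by (intro mult_left_mono) auto
    moreover have "real b * min ?E1 ?E2 \<le> real b * ?E2" by (intro mult_left_mono) auto
    ultimately show ?thesis by (simp add: algebra_simps)
  qed
  then have "real (a + b) * min ?E1 ?E2 \<le> real (a + b) * ?E" using fin_ineq by linarith
  then have "min ?E1 ?E2 \<le> ?E" using apos by (simp add: mult_le_cancel_left)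
  then show ?thesis by (simp add: t1_def t2_def)
qed


lemma part_sub:
  assumes "is_part \<tau> S C" shows "C \<subseteq> S"
proof
  fix x assume x: "x \<in> C"
  obtain a b where ab: "a < b" "b \<le> length \<tau>" "C = set (take (b - a) (drop a \<tau>))"
      "\<forall>k\<in>{a..<b}. \<tau> ! k \<in> S"
    using assms unfolding is_part_def by blast
  then obtain i where i: "i < length (take (b - a) (drop a \<tau>))" "x = take (b - a) (drop a \<tau>) ! i"
    using x by (auto simp: in_set_conv_nth)
  then have "x = \<tau> ! (a + i)" "a + i \<in> {a..<b}" using ab by auto
  then show "x \<in> S" using ab(4) by auto
qed

theorem lemma6:
  fixes d :: "'a \<Rightarrow> 'a \<Rightarrow> real" and r :: 'a
    and X :: "'b set" and S :: "'b \<Rightarrow> 'a set"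
    and \<tau> :: "'a list" and p :: real and z :: 'b and Ci Cj :: "'a set"
  assumes metric: "\<And>x. d x x = 0" "\<And>x y. d x y \<ge> 0" "\<And>x y. d x y = d y x"
      "\<And>x y w. d x w \<le> d x y + d y w"
    and finX: "finite X" and finS: "\<And>v. v \<in> X \<Longrightarrow> finite (S v)"
    and disj: "\<And>v w. v \<in> X \<Longrightarrow> w \<in> X \<Longrightarrow> v \<noteq> w \<Longrightarrow> S v \<inter> S w = {}"
    and root: "r \<notin> (\<Union>v\<in>X. S v)"
    and coloc: "\<And>v u w x. v \<in> X \<Longrightarrow> u \<in> S v \<Longrightarrow> w \<in> S v \<Longrightarrow>
                  x \<in> insert r (\<Union>v\<in>X. S v) \<Longrightarrow> d u w = 0 \<and> d u x = d w x"
    and p: "0 \<le> p" "p \<le> 1"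
    and master: "distinct \<tau>" "set \<tau> = (\<Union>v\<in>X. S v)"
    and z: "z \<in> X"
    and Ci: "is_part \<tau> (S z) Ci" and Cj: "is_part \<tau> (S z) Cj" and ij: "Ci \<noteq> Cj"
  shows "exp_LAT d r \<tau> (\<Union>v\<in>X. S v) p \<ge>
           min (exp_LAT d r (move_after \<tau> Ci Cj) (\<Union>v\<in>X. S v) p)
               (exp_LAT d r (move_before \<tau> Ci Cj) (\<Union>v\<in>X. S v) p)"
proof -
  obtain a1 b1 a2 b2 where ord: "a1 < b1" "b1 \<le> a2" "a2 < b2" "b2 \<le> length \<tau>"
    and cases: "(Ci = set (take (b1 - a1) (drop a1 \<tau>)) \<and> Cj = set (take (b2 - a2) (drop a2 \<tau>))) \<or>
     (Cj = set (take (b1 - a1) (drop a1 \<tau>)) \<and> Ci = set (take (b2 - a2) (drop a2 \<tau>)))"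
    using parts_order[OF Ci Cj ij] by blast
  define \<alpha> where "\<alpha> = take a1 \<tau>"
  define Xl where "Xl = take (b1 - a1) (drop a1 \<tau>)"
  define \<beta> where "\<beta> = take (a2 - b1) (drop b1 \<tau>)"
  define Yl where "Yl = take (b2 - a2) (drop a2 \<tau>)"
  define \<gamma> where "\<gamma> = drop b2 \<tau>"
  have t1: "\<tau> = \<alpha> @ Xl @ drop b1 \<tau>"
    unfolding \<alpha>_def Xl_def using split3[of a1 b1 \<tau>] ord by simp
  have t2: "drop b1 \<tau> = \<beta> @ Yl @ \<gamma>"
  proof -
    have "drop b1 \<tau> = take (a2 - b1) (drop b1 \<tau>) @ take (b2 - b1 - (a2 - b1)) (drop (a2 - b1) (drop b1 \<tau>))
            @ drop (b2 - b1) (drop b1 \<tau>)"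
      by (rule split3) (use ord in simp)
    moreover have "b2 - b1 - (a2 - b1) = b2 - a2" using ord by simp
    moreover have "drop (a2 - b1) (drop b1 \<tau>) = drop a2 \<tau>" using ord by simp
    moreover have "drop (b2 - b1) (drop b1 \<tau>) = drop b2 \<tau>" using ord by simp
    ultimately show ?thesis by (simp add: \<beta>_def Yl_def \<gamma>_def)
  qed
  have tau: "\<tau> = \<alpha> @ Xl @ \<beta> @ Yl @ \<gamma>" using t1 t2 by simp
  have Xne: "Xl \<noteq> []" unfolding Xl_def using ord by simp
  have Yne: "Yl \<noteq> []" unfolding Yl_def using ord by simp
  have CiS: "Ci \<subseteq> S z" and CjS: "Cj \<subseteq> S z" using part_sub[OF Ci] part_sub[OF Cj] by auto
  have XS: "set Xl \<subseteq> S z" and YS: "set Yl \<subseteq> S z"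
    using cases CiS CjS by (auto simp: Xl_def Yl_def)
  define z0 where "z0 = hd Xl"
  have z0S: "z0 \<in> S z" using XS Xne by (auto simp: z0_def)
  have zeq: "d u x = d z0 x" if "u \<in> S z" "x \<in> insert r (set \<tau>)" for u x
    using coloc[OF z that(1) z0S] that(2) master(2) by auto
  have zz: "d u w = 0" if "u \<in> S z" "w \<in> S z" for u w
    using coloc[OF z that, of r] by auto
  have dist: "distinct \<tau>" by (rule master(1))
  from cases show ?thesis
  proof
    assume c: "Ci = set (take (b1 - a1) (drop a1 \<tau>)) \<and> Cj = set (take (b2 - a2) (drop a2 \<tau>))"
    then have c': "Ci = set Xl" "Cj = set Yl" by (simp_all add: Xl_def Yl_def)
    have m1: "move_after \<tau> Ci Cj = \<alpha> @ (Xl @ Yl) @ \<beta> @ \<gamma>"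
      unfolding c' using L1[OF tau dist Xne Yne] by simp
    have m2: "move_before \<tau> Ci Cj = \<alpha> @ \<beta> @ (Xl @ Yl) @ \<gamma>"
      unfolding c' using L3[OF tau dist Xne Yne] by simp
    have dM: "distinct (Xl @ Yl)" using dist tau by auto
    have sM: "set (Xl @ Yl) = set Xl \<union> set Yl" by simp
    from core[where d=d and r=r and Zs="S z" and p=p and \<tau>=\<tau>, OF metric(3) metric(4) metric(2) tau dist Xne Yne dM sM XS YS zeq zz p] show ?thesis unfolding m1 m2 master(2) by simp
  next
    assume c: "Cj = set (take (b1 - a1) (drop a1 \<tau>)) \<and> Ci = set (take (b2 - a2) (drop a2 \<tau>))"
    then have c': "Cj = set Xl" "Ci = set Yl" by (simp_all add: Xl_def Yl_def)
    have m1: "move_after \<tau> Ci Cj = \<alpha> @ \<beta> @ (Yl @ Xl) @ \<gamma>"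
      unfolding c' using L2[OF tau dist Xne Yne] by simp
    have m2: "move_before \<tau> Ci Cj = \<alpha> @ (Yl @ Xl) @ \<beta> @ \<gamma>"
      unfolding c' using L4[OF tau dist Xne Yne] by simp
    have dM: "distinct (Yl @ Xl)" using dist tau by auto
    have sM: "set (Yl @ Xl) = set Xl \<union> set Yl" by auto
    from core[where d=d and r=r and Zs="S z" and p=p and \<tau>=\<tau>, OF metric(3) metric(4) metric(2) tau dist Xne Yne dM sM XS YS zeq zz p] show ?thesis unfolding m1 m2 master(2) by (simp add: min.commute)
  qed
qed

end
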